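(* For integers $q\ge1$, $a$, $n$ let $S(q,a,n)=\sum_{x=1}^q e\big(\frac{ax^2+nx}{q}\big)$, and for integers $n_1,n_2,n_3,m$ let $$T(q;n_1,n_2,n_3,m)=\sum_{\substack{a=1\\ (a,q)=1}}^q S(q,a,n_1)S(q,a,n_2)S(q,a,n_3)\,e\Big(\frac{\overline{a}\,m}{q}\Big),$$ where $\overline{a}$ is the inverse of $a$ modulo $q$. Suppose that $q=q_1q_2$ with $(q_1,q_2)=1$, $q_1$ square-free and $q_2$ square-full. Then for all integers $n_1,n_2,n_3,m$, $$|T(q;n_1,n_2,n_3,m)|\le 4q_1^2q_2^{5/2}.$$
   Context: $e(z)=e^{2\pi i z}$. A positive integer $q_2$ is square-full if $p\mid q_2$ implies $p^2\mid q_2$ for every prime $p$ (in particular $q_2=1$ is allowed). *)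

theory Defs
  imports "HOL-Analysis.Analysis" "HOL-Number_Theory.Number_Theory" "HOL-Computational_Algebra.Squarefree"
begin

definition e :: "real \<Rightarrow> complex" where
  "e z = exp (2 * pi * \<i> * complex_of_real z)"

definition squarefull :: "nat \<Rightarrow> bool" where
  "squarefull n \<longleftrightarrow> (\<forall>p. prime p \<and> p dvd n \<longrightarrow> p^2 dvd n)"

(* an inverse of a modulo q (any representative; e(abar*m/q) does not depend on the choice) *)
definition inv_mod :: "int \<Rightarrow> int \<Rightarrow> int" where
  "inv_mod q a = (SOME b. [a * b = 1] (mod q))"

definition S :: "int \<Rightarrow> int \<Rightarrow> int \<Rightarrow> complex" where
  "S q a n = (\<Sum>x\<in>{1..q}. e (real_of_int (a * x^2 + n * x) / real_of_int q))"

definition T :: "int \<Rightarrow> int \<Rightarrow> int \<Rightarrow> int \<Rightarrow> int \<Rightarrow> complex" where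
  "T q n1 n2 n3 m = (\<Sum>a\<in>{a\<in>{1..q}. coprime a q}.
      S q a n1 * S q a n2 * S q a n3 * e (real_of_int (inv_mod q a * m) / real_of_int q))"

end

theory Submission
  imports Defs
begin


lemma e_add: "e (x + y) = e x * e y"
  unfolding e_def by (simp add: distrib_left exp_add)

lemma e_int: "e (of_int k) = 1"
proof -
  have "2 * complex_of_real pi * \<i> * complex_of_real (of_int k) = 2 * pi * \<i> * of_int k"
    by simp
  then show ?thesis unfolding e_def
    by (simp add: exp_eq_1)
qed

lemma norm_e [simp]: "norm (e x) = 1"
  unfolding e_def by (simp add: norm_exp_eq_Re)

lemma cnj_e: "cnj (e x) = e (- x)"
  unfolding e_def by (simp add: exp_cnj)

lemma e_zero [simp]: "e 0 = 1"
  unfolding e_def by simp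

lemma e_cong:
  assumes "q \<noteq> 0" "[x = y] (mod q)"
  shows "e (of_int x / of_int q) = e (of_int y / of_int q)"
proof -
  obtain k where k: "x - y = q * k"
    using assms(2) unfolding cong_iff_dvd_diff dvd_def by blast
  have xk: "x = y + q * k" using k by linarith
  have "(of_int x :: real) = of_int y + of_int q * of_int k" by (simp add: xk)
  then have "of_int x / of_int q = of_int y / of_int q + (of_int k :: real)"
    using assms(1) by (simp add: add_divide_distrib)
  then show ?thesis by (simp add: e_add e_int)
qed

lemma e_mod:
  assumes "q \<noteq> 0"
  shows "e (of_int (x mod q) / of_int q) = e (of_int x / of_int q)"
  by (rule e_cong[OF assms]) (simp add: cong_def)

lemma e_eq_1_iff:
  assumes "q > 0"
  shows "e (of_int k / of_int q) = 1 \<longleftrightarrow> q dvd k"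
proof
  assume "q dvd k"
  then obtain j where "k = q * j" by (auto simp: dvd_def)
  then show "e (of_int k / of_int q) = 1" using assms by (simp add: e_int)
next
  assume "e (of_int k / of_int q) = 1"
  then obtain n :: int where n: "2 * pi * (of_int k / of_int q) = of_int (2 * n) * pi"
    unfolding e_def exp_eq_1 by auto
  then have h: "(of_int k / of_int q) * (2 * pi) = (of_int n :: real) * (2 * pi)"
    by (simp add: algebra_simps)
  have "2 * pi \<noteq> 0" by simp
  then have "of_int k / of_int q = (of_int n :: real)" using mult_right_cancel h by blast
  then have "of_int k = (of_int (q * n) :: real)" using assms by (simp add: field_simps)
  then have "k = q * n" by linarith
  then show "q dvd k" by simp
qed

section \<open>Reindexing sums modulo q\<close>

lemma sum_reindex_mod:
  fixes f :: "int \<Rightarrow> 'b::comm_monoid_add"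
  assumes q: "q > 0" and per: "\<And>x. f (x mod q) = f x"
    and gh: "\<And>x. [g (h x) = x] (mod q)" and hg: "\<And>x. [h (g x) = x] (mod q)"
    and gc: "\<And>x y. [x = y] (mod q) \<Longrightarrow> [g x = g y] (mod q)"
    and hc: "\<And>x y. [x = y] (mod q) \<Longrightarrow> [h x = h y] (mod q)"
  shows "(\<Sum>x\<in>{0..<q}. f (g x)) = (\<Sum>x\<in>{0..<q}. f x)"
proof (rule sum.reindex_bij_witness[where j = "\<lambda>x. g x mod q" and i = "\<lambda>x. h x mod q"])
  fix a assume a: "a \<in> {0..<q}"
  have "[h (g a mod q) = h (g a)] (mod q)" by (rule hc) (simp add: cong_def)
  then have "[h (g a mod q) = a] (mod q)" using hg cong_trans by blast
  then show "h (g a mod q) mod q = a" using a by (simp add: cong_def)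
next
  fix b assume b: "b \<in> {0..<q}"
  have "[g (h b mod q) = g (h b)] (mod q)" by (rule gc) (simp add: cong_def)
  then have "[g (h b mod q) = b] (mod q)" using gh cong_trans by blast
  then show "g (h b mod q) mod q = b" using b by (simp add: cong_def)
qed (use q per in auto)

lemma sum_shift:
  fixes f :: "int \<Rightarrow> 'b::comm_monoid_add"
  assumes q: "q > 0" and per: "\<And>x. f (x mod q) = f x"
  shows "(\<Sum>x\<in>{0..<q}. f (x + v)) = (\<Sum>x\<in>{0..<q}. f x)"
proof (rule sum_reindex_mod[where h = "\<lambda>x. x - v" and g = "\<lambda>x. x + v"])
  fix x y :: int assume "[x = y] (mod q)"
  then show "[x + v = y + v] (mod q)" "[x - v = y - v] (mod q)"
    by (auto intro: cong_add cong_diff)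
qed (use q per in auto)

lemma sum_mult:
  fixes f :: "int \<Rightarrow> 'b::comm_monoid_add"
  assumes q: "q > 0" and per: "\<And>x. f (x mod q) = f x" and cop: "coprime u q"
  shows "(\<Sum>x\<in>{0..<q}. f (u * x)) = (\<Sum>x\<in>{0..<q}. f x)"
proof -
  obtain w where w: "[u * w = 1] (mod q)" using cong_solve_coprime_int[OF cop] by blast
  show ?thesis
  proof (rule sum_reindex_mod[where h = "\<lambda>x. w * x" and g = "\<lambda>x. u * x"])
    fix x
    have "[u * (w * x) = (u * w) * x] (mod q)" by (simp add: mult.assoc)
    moreover have "[(u * w) * x = 1 * x] (mod q)" by (rule cong_mult[OF w cong_refl])
    ultimately show "[u * (w * x) = x] (mod q)" using cong_trans by auto
    have "[w * (u * x) = (u * w) * x] (mod q)" by (simp add: mult_ac)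
    then show "[w * (u * x) = x] (mod q)" using \<open>[(u * w) * x = 1 * x] (mod q)\<close> cong_trans by auto
  qed (use q per in \<open>auto intro: cong_mult cong_refl\<close>)
qed

lemma sum_1q:
  fixes f :: "int \<Rightarrow> 'b::comm_monoid_add"
  assumes q: "q > 0" and per: "\<And>x. P x \<Longrightarrow> f (x mod q) = f x"
    and Pp: "\<And>x. P (x mod q) = P x"
  shows "(\<Sum>x\<in>{x\<in>{1..q}. P x}. f x) = (\<Sum>x\<in>{x\<in>{0..<q}. P x}. f x)"
proof (rule sum.reindex_bij_witness[where j = "\<lambda>x. x mod q" and i = "\<lambda>x. if x = 0 then q else x"])
  fix a assume "a \<in> {x\<in>{1..q}. P x}"
  then have "a = q \<or> (1 \<le> a \<and> a < q)" by auto
  then show "(if a mod q = 0 then q else a mod q) = a"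
    by (elim disjE) auto
next
  fix a assume a: "a \<in> {x\<in>{1..q}. P x}"
  then show "a mod q \<in> {x\<in>{0..<q}. P x}" using q Pp by auto
  show "f (a mod q) = f a" using per a by auto
next
  fix b assume b: "b \<in> {x\<in>{0..<q}. P x}"
  then show "(if b = 0 then q else b) mod q = b" by auto
  show "(if b = 0 then q else b) \<in> {x\<in>{1..q}. P x}"
    using b Pp[of q] q by auto
qed

lemma geom_sum:
  assumes q: "q > 0"
  shows "(\<Sum>y\<in>{0..<q}. e (of_int (k * y) / of_int q)) = (if q dvd k then of_int q else 0)"
proof (cases "q dvd k")
  case True
  then obtain j where "k = q * j" by (auto simp: dvd_def)
  then have "\<And>y. e (of_int (k * y) / of_int q) = 1" using q
    by (simp add: mult.assoc) (metis e_int of_int_mult)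
  then show ?thesis using True q by simp
next
  case False
  define F where "F = (\<lambda>y. e (of_int (k * y) / of_int q))"
  define w where "w = e (of_int k / of_int q)"
  have w1: "w \<noteq> 1" using False q e_eq_1_iff unfolding w_def by blast
  have per: "\<And>x. F (x mod q) = F x"
    unfolding F_def using q by (intro e_cong) (auto simp: cong_def mod_mult_right_eq)
  have step: "\<And>y. F (y + 1) = w * F y"
    unfolding F_def w_def e_add[symmetric] by (simp add: distrib_left add_divide_distrib add.commute)
  have "(\<Sum>y\<in>{0..<q}. F (y + 1)) = (\<Sum>y\<in>{0..<q}. F y)" by (rule sum_shift) (use q per in auto)
  then have "w * (\<Sum>y\<in>{0..<q}. F y) = (\<Sum>y\<in>{0..<q}. F y)"
    by (simp add: step sum_distrib_left)
  then have "(w - 1) * (\<Sum>y\<in>{0..<q}. F y) = 0" by (simp add: algebra_simps)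
  then show ?thesis using w1 False by (simp add: F_def)
qed




lemma crt_sum:
  fixes f g :: "int \<Rightarrow> complex"
  assumes q1: "q1 > 0" and q2: "q2 > 0" and cop: "coprime q1 q2"
    and fper: "\<And>x. P1 x \<Longrightarrow> f (x mod q1) = f x"
    and gper: "\<And>x. P2 x \<Longrightarrow> g (x mod q2) = g x"
    and P1p: "\<And>x. P1 (x mod q1) = P1 x" and P2p: "\<And>x. P2 (x mod q2) = P2 x"
  shows "(\<Sum>x\<in>{x\<in>{0..<q1*q2}. P1 x \<and> P2 x}. f x * g x)
       = (\<Sum>x\<in>{x\<in>{0..<q1}. P1 x}. f x) * (\<Sum>x\<in>{x\<in>{0..<q2}. P2 x}. g x)"
proof -
  obtain r1 r2 where r: "r1 * q2 + r2 * q1 = 1"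
    using bezout_int[of q2 q1] cop by (auto simp: coprime_iff_gcd_eq_1 gcd.commute)
  define A1 where "A1 = {x\<in>{0..<q1}. P1 x}"
  define A2 where "A2 = {x\<in>{0..<q2}. P2 x}"
  have rhs: "(\<Sum>x\<in>A1. f x) * (\<Sum>x\<in>A2. g x) = (\<Sum>(u,v)\<in>A1 \<times> A2. f u * g v)"
    by (simp add: sum_product sum.cartesian_product)
  define I where "I = (\<lambda>(u,v). (u * q2 * r1 + v * q1 * r2) mod (q1 * q2))"
  have m1: "(u * q2 * r1 + v * q1 * r2) mod q1 = u mod q1" for u v
  proof -
    have e1: "r1 * q2 = 1 - r2 * q1" using r by linarith
    have "u * q2 * r1 + v * q1 * r2 = u * (r1 * q2) + v * q1 * r2" by (simp add: ac_simps)
    also have "\<dots> = u + q1 * (v * r2 - u * r2)" unfolding e1 by (simp add: algebra_simps)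
    finally have "u * q2 * r1 + v * q1 * r2 = u + q1 * (v * r2 - u * r2)" .
    then show ?thesis by simp
  qed
  have m2: "(u * q2 * r1 + v * q1 * r2) mod q2 = v mod q2" for u v
  proof -
    have e1: "r2 * q1 = 1 - r1 * q2" using r by linarith
    have "u * q2 * r1 + v * q1 * r2 = u * q2 * r1 + v * (r2 * q1)" by (simp add: ac_simps)
    also have "\<dots> = v + q2 * (u * r1 - v * r1)" unfolding e1 by (simp add: algebra_simps)
    finally have "u * q2 * r1 + v * q1 * r2 = v + q2 * (u * r1 - v * r1)" .
    then show ?thesis by simp
  qed
  have "(\<Sum>x\<in>{x\<in>{0..<q1*q2}. P1 x \<and> P2 x}. f x * g x) = (\<Sum>(u,v)\<in>A1 \<times> A2. f u * g v)"
  proof (rule sum.reindex_bij_witness[where j = "\<lambda>x. (x mod q1, x mod q2)" and i = I])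
    fix a assume a: "a \<in> {x\<in>{0..<q1*q2}. P1 x \<and> P2 x}"
    let ?X = "(a mod q1) * q2 * r1 + (a mod q2) * q1 * r2"
    have "[?X = a] (mod q1)" unfolding cong_def using m1[of "a mod q1" "a mod q2"] by simp
    moreover have "[?X = a] (mod q2)" unfolding cong_def using m2[of "a mod q1" "a mod q2"] by simp
    ultimately have "[?X = a] (mod q1 * q2)" using coprime_cong_mult cop by blast
    then show "I (a mod q1, a mod q2) = a" using a unfolding I_def cong_def by simp
    show "(a mod q1, a mod q2) \<in> A1 \<times> A2" using a q1 q2 P1p P2p unfolding A1_def A2_def by simp
    show "(case (a mod q1, a mod q2) of (u, v) \<Rightarrow> f u * g v) = f a * g a"
      using a fper gper by simp
  next
    fix b assume b: "b \<in> A1 \<times> A2"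
    then obtain u v where b': "b = (u, v)" "u \<in> A1" "v \<in> A2" by auto
    have d1: "q1 dvd q1 * q2" and d2: "q2 dvd q1 * q2" by simp_all
    have "I b mod q1 = u" using b' m1[of u v] mod_mod_cancel[OF d1] unfolding I_def A1_def by simp
    moreover have "I b mod q2 = v" using b' m2[of u v] mod_mod_cancel[OF d2] unfolding I_def A2_def by simp
    ultimately show "(I b mod q1, I b mod q2) = b" using b' by simp
    have "0 \<le> I b \<and> I b < q1 * q2" unfolding I_def b' using q1 q2 by simp
    moreover have "P1 (I b)" using P1p[of "I b"] \<open>I b mod q1 = u\<close> b' unfolding A1_def by simp
    moreover have "P2 (I b)" using P2p[of "I b"] \<open>I b mod q2 = v\<close> b' unfolding A2_def by simp
    ultimately show "I b \<in> {x\<in>{0..<q1*q2}. P1 x \<and> P2 x}" by simp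
  qed
  then show ?thesis using rhs unfolding A1_def A2_def by simp
qed




definition S0 :: "int \<Rightarrow> int \<Rightarrow> int \<Rightarrow> complex" where
  "S0 q B M = (\<Sum>x\<in>{0..<q}. e (of_int (B * x^2 + M * x) / of_int q))"

lemma poly_cong: "[x = y] (mod q) \<Longrightarrow> [B * x^2 + M * x = B * y^2 + M * y] (mod q)"
  by (intro cong_add cong_mult cong_pow cong_refl) auto

lemma S0_summand_per:
  assumes "q > 0"
  shows "e (of_int (B * (x mod q)^2 + M * (x mod q)) / of_int q) = e (of_int (B * x^2 + M * x) / of_int q)"
  using assms by (intro e_cong poly_cong) (auto simp: cong_def)

lemma S_S0: assumes q: "q > 0" shows "S q B M = S0 q B M"
proof -
  have "(\<Sum>x\<in>{x\<in>{1..q}. True}. e (of_int (B * x^2 + M * x) / of_int q))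
      = (\<Sum>x\<in>{x\<in>{0..<q}. True}. e (of_int (B * x^2 + M * x) / of_int q))"
    by (rule sum_1q) (use q S0_summand_per in auto)
  moreover have eq: "{x\<in>{1..q}. True} = {1..q}" "{x\<in>{0..<q}. True} = {0..<q}" by auto
  ultimately show ?thesis unfolding S_def S0_def by simp
qed

lemma S0_congB:
  assumes q: "q > 0" and c: "[B = B'] (mod q)"
  shows "S0 q B M = S0 q B' M"
  unfolding S0_def
  by (rule sum.cong[OF refl], rule e_cong) (use q c in \<open>auto intro: cong_add cong_mult cong_refl\<close>)

lemma e_split:
  assumes "q1 \<noteq> 0" "q2 \<noteq> 0" and r: "r1 * q2 + r2 * q1 = 1"
  shows "e (of_int k / of_int (q1 * q2)) = e (of_int (r1 * k) / of_int q1) * e (of_int (r2 * k) / of_int q2)"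
proof -
  have r': "(of_int r1 * of_int q2 + of_int r2 * of_int q1 :: real) = 1"
    using r by (metis of_int_1 of_int_add of_int_mult)
  have "of_int k / of_int (q1 * q2) = (of_int k * (of_int r1 * of_int q2 + of_int r2 * of_int q1)) / (of_int q1 * (of_int q2 :: real))"
    using r' by simp
  also have "\<dots> = of_int (r1 * k) / of_int q1 + of_int (r2 * k) / of_int q2"
    using assms(1,2) by (simp add: field_simps)
  finally show ?thesis by (simp add: e_add)
qed

lemma S0_crt:
  assumes q1: "q1 > 0" and q2: "q2 > 0" and cop: "coprime q1 q2" and r: "r1 * q2 + r2 * q1 = 1"
  shows "S0 (q1 * q2) B M = S0 q1 (r1 * B) (r1 * M) * S0 q2 (r2 * B) (r2 * M)"
proof -
  define F1 where "F1 = (\<lambda>x. e (of_int ((r1 * B) * x^2 + (r1 * M) * x) / of_int q1))"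
  define F2 where "F2 = (\<lambda>x. e (of_int ((r2 * B) * x^2 + (r2 * M) * x) / of_int q2))"
  have "S0 (q1 * q2) B M = (\<Sum>x\<in>{x\<in>{0..<q1*q2}. True \<and> True}. F1 x * F2 x)"
    unfolding S0_def
  proof (rule sum.cong)
    fix x
    have "e (of_int (B * x^2 + M * x) / of_int (q1 * q2))
        = e (of_int (r1 * (B * x^2 + M * x)) / of_int q1) * e (of_int (r2 * (B * x^2 + M * x)) / of_int q2)"
      by (rule e_split) (use q1 q2 r in auto)
    moreover have "r1 * (B * x^2 + M * x) = (r1 * B) * x^2 + (r1 * M) * x"
      "r2 * (B * x^2 + M * x) = (r2 * B) * x^2 + (r2 * M) * x" by (simp_all add: algebra_simps)
    ultimately show "e (of_int (B * x^2 + M * x) / of_int (q1 * q2)) = F1 x * F2 x"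
      unfolding F1_def F2_def by simp
  qed auto
  also have "\<dots> = (\<Sum>x\<in>{x\<in>{0..<q1}. True}. F1 x) * (\<Sum>x\<in>{x\<in>{0..<q2}. True}. F2 x)"
  proof (rule crt_sum[OF q1 q2 cop])
    fix x show "F1 (x mod q1) = F1 x" unfolding F1_def by (rule S0_summand_per[OF q1])
  next
    fix x show "F2 (x mod q2) = F2 x" unfolding F2_def by (rule S0_summand_per[OF q2])
  qed auto
  also have "\<dots> = S0 q1 (r1 * B) (r1 * M) * S0 q2 (r2 * B) (r2 * M)"
  proof -
    have eqs: "{x\<in>{0..<q1}. True} = {0..<q1}" "{x\<in>{0..<q2}. True} = {0..<q2}" by auto
    show ?thesis unfolding eqs S0_def F1_def F2_def ..
  qed
  finally show ?thesis .
qed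

lemma inv_mod_cong: "coprime a q \<Longrightarrow> [a * inv_mod q a = 1] (mod q)"
  unfolding inv_mod_def by (rule someI_ex) (rule cong_solve_coprime_int)

lemma inv_unique:
  assumes "[a * b = 1] (mod q)" "[a * b' = 1] (mod q)"
  shows "[b = b'] (mod q)"
proof -
  have "[b * (a * b') = b * 1] (mod q)" using assms(2) by (rule cong_mult[OF cong_refl])
  moreover have "[(a * b) * b' = 1 * b'] (mod q)" using assms(1) by (rule cong_mult[OF _ cong_refl])
  ultimately show ?thesis
    by (metis (no_types, lifting) cong_sym cong_trans mult.assoc mult.commute mult_1)
qed

lemma inv_modulus:
  assumes "q1 dvd q" "coprime a q"
  shows "[inv_mod q a = inv_mod q1 a] (mod q1)"
proof -
  have c1: "coprime a q1" using assms coprime_imp_coprime dvd_trans by (metis dvd_refl)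
  show ?thesis
    by (rule inv_unique[OF cong_dvd_modulus[OF inv_mod_cong[OF assms(2)] assms(1)] inv_mod_cong[OF c1]])
qed

lemma inv_mod_mod:
  assumes q: "q > 0" and c: "coprime a q"
  shows "[inv_mod q (a mod q) = inv_mod q a] (mod q)"
proof -
  have c': "coprime (a mod q) q" using c q coprime_mod_left_iff by auto
  have "[a * inv_mod q (a mod q) = (a mod q) * inv_mod q (a mod q)] (mod q)"
    by (rule cong_mult) (auto simp: cong_def)
  then have "[a * inv_mod q (a mod q) = 1] (mod q)" using inv_mod_cong[OF c'] cong_trans by blast
  then show ?thesis using inv_unique inv_mod_cong[OF c] by blast
qed

definition V :: "int \<Rightarrow> int \<Rightarrow> int \<Rightarrow> int \<Rightarrow> int \<Rightarrow> int \<Rightarrow> complex" where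
  "V q c n1 n2 n3 m = (\<Sum>a\<in>{a\<in>{0..<q}. coprime a q}.
      S0 q (c * a) n1 * S0 q (c * a) n2 * S0 q (c * a) n3 * e (of_int (inv_mod q a * m) / of_int q))"

lemma V_summand_per:
  assumes q: "q > 0" and c: "coprime a q"
  shows "S0 q (c * (a mod q)) n1 * S0 q (c * (a mod q)) n2 * S0 q (c * (a mod q)) n3
           * e (of_int (inv_mod q (a mod q) * m) / of_int q)
       = S0 q (c * a) n1 * S0 q (c * a) n2 * S0 q (c * a) n3 * e (of_int (inv_mod q a * m) / of_int q)"
proof -
  have "[c * (a mod q) = c * a] (mod q)" by (rule cong_mult) (auto simp: cong_def)
  then have "S0 q (c * (a mod q)) n = S0 q (c * a) n" for n using S0_congB q by blast
  moreover have "e (of_int (inv_mod q (a mod q) * m) / of_int q) = e (of_int (inv_mod q a * m) / of_int q)"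
    using q inv_mod_mod[OF q c] by (intro e_cong) (auto intro: cong_mult)
  ultimately show ?thesis by simp
qed

lemma T_V:
  assumes q: "q > 0"
  shows "T q n1 n2 n3 m = V q 1 n1 n2 n3 m"
proof -
  have "T q n1 n2 n3 m = (\<Sum>a\<in>{a\<in>{1..q}. coprime a q}.
      S0 q (1 * a) n1 * S0 q (1 * a) n2 * S0 q (1 * a) n3 * e (of_int (inv_mod q a * m) / of_int q))"
    unfolding T_def using q by (simp add: S_S0)
  also have "\<dots> = V q 1 n1 n2 n3 m"
    unfolding V_def
  proof (rule sum_1q)
    fix x assume "coprime x q"
    then show "S0 q (1 * (x mod q)) n1 * S0 q (1 * (x mod q)) n2 * S0 q (1 * (x mod q)) n3
           * e (of_int (inv_mod q (x mod q) * m) / of_int q)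
       = S0 q (1 * x) n1 * S0 q (1 * x) n2 * S0 q (1 * x) n3 * e (of_int (inv_mod q x * m) / of_int q)"
      by (rule V_summand_per[OF q])
  qed (use q coprime_mod_left_iff in auto)
  finally show ?thesis .
qed

lemma V_crt:
  assumes q1: "q1 > 0" and q2: "q2 > 0" and cop: "coprime q1 q2" and r: "r1 * q2 + r2 * q1 = 1"
  shows "V (q1 * q2) c n1 n2 n3 m
       = V q1 (r1 * c) (r1 * n1) (r1 * n2) (r1 * n3) (r1 * m) * V q2 (r2 * c) (r2 * n1) (r2 * n2) (r2 * n3) (r2 * m)"
proof -
  define f where "f = (\<lambda>a. S0 q1 ((r1 * c) * a) (r1 * n1) * S0 q1 ((r1 * c) * a) (r1 * n2)
     * S0 q1 ((r1 * c) * a) (r1 * n3) * e (of_int (inv_mod q1 a * (r1 * m)) / of_int q1))"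
  define g where "g = (\<lambda>a. S0 q2 ((r2 * c) * a) (r2 * n1) * S0 q2 ((r2 * c) * a) (r2 * n2)
     * S0 q2 ((r2 * c) * a) (r2 * n3) * e (of_int (inv_mod q2 a * (r2 * m)) / of_int q2))"
  have set: "{a\<in>{0..<q1*q2}. coprime a (q1*q2)} = {a\<in>{0..<q1*q2}. coprime a q1 \<and> coprime a q2}"
    by auto
  have summ: "S0 (q1*q2) (c * a) n1 * S0 (q1*q2) (c * a) n2 * S0 (q1*q2) (c * a) n3
       * e (of_int (inv_mod (q1*q2) a * m) / of_int (q1*q2)) = f a * g a"
    if a: "coprime a (q1 * q2)" for a
  proof -
    have sc: "S0 (q1*q2) (c * a) n = S0 q1 ((r1 * c) * a) (r1 * n) * S0 q2 ((r2 * c) * a) (r2 * n)" for n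
      using S0_crt[OF q1 q2 cop r, of "c * a" n] by (simp add: mult.assoc)
    have e1: "e (of_int (r1 * (inv_mod (q1*q2) a * m)) / of_int q1) = e (of_int (inv_mod q1 a * (r1 * m)) / of_int q1)"
    proof -
      have "[inv_mod (q1*q2) a = inv_mod q1 a] (mod q1)" by (rule inv_modulus[OF _ a]) simp
      then have "[r1 * (inv_mod (q1*q2) a * m) = r1 * (inv_mod q1 a * m)] (mod q1)"
        by (intro cong_mult cong_refl)
      then show ?thesis using q1 by (intro e_cong) (auto simp: ac_simps)
    qed
    have e2: "e (of_int (r2 * (inv_mod (q1*q2) a * m)) / of_int q2) = e (of_int (inv_mod q2 a * (r2 * m)) / of_int q2)"
    proof -
      have "[inv_mod (q1*q2) a = inv_mod q2 a] (mod q2)" by (rule inv_modulus[OF _ a]) simp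
      then have "[r2 * (inv_mod (q1*q2) a * m) = r2 * (inv_mod q2 a * m)] (mod q2)"
        by (intro cong_mult cong_refl)
      then show ?thesis using q2 by (intro e_cong) (auto simp: ac_simps)
    qed
    have "e (of_int (inv_mod (q1*q2) a * m) / of_int (q1*q2))
        = e (of_int (r1 * (inv_mod (q1*q2) a * m)) / of_int q1) * e (of_int (r2 * (inv_mod (q1*q2) a * m)) / of_int q2)"
      using q1 q2 r by (intro e_split) auto
    then show ?thesis unfolding f_def g_def sc e1 e2 by (simp add: e1 e2 ac_simps)
  qed
  have "V (q1 * q2) c n1 n2 n3 m = (\<Sum>a\<in>{a\<in>{0..<q1*q2}. coprime a q1 \<and> coprime a q2}. f a * g a)"
    unfolding V_def set by (rule sum.cong[OF refl]) (use summ in auto)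
  also have "\<dots> = (\<Sum>a\<in>{a\<in>{0..<q1}. coprime a q1}. f a) * (\<Sum>a\<in>{a\<in>{0..<q2}. coprime a q2}. g a)"
  proof (rule crt_sum[OF q1 q2 cop])
    fix x assume "coprime x q1"
    then show "f (x mod q1) = f x" unfolding f_def by (rule V_summand_per[OF q1])
  next
    fix x assume "coprime x q2"
    then show "g (x mod q2) = g x" unfolding g_def by (rule V_summand_per[OF q2])
  qed (use q1 q2 coprime_mod_left_iff in auto)
  also have "\<dots> = V q1 (r1 * c) (r1 * n1) (r1 * n2) (r1 * n3) (r1 * m) * V q2 (r2 * c) (r2 * n1) (r2 * n2) (r2 * n3) (r2 * m)"
    unfolding V_def f_def g_def ..
  finally show ?thesis .
qed




lemma S0_normsq:
  assumes q: "q > 0" and cop: "coprime B q"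
  shows "S0 q B M * cnj (S0 q B M)
       = of_int q * (\<Sum>h\<in>{h\<in>{0..<q}. q dvd 2 * h}. e (of_int (B * h^2 + M * h) / of_int q))"
proof -
  define f where "f = (\<lambda>x::int. B * x^2 + M * x)"
  define E where "E = (\<lambda>x y. e (of_int (f x - f y) / of_int q))"
  define g where "g = (\<lambda>h. e (of_int (B * h^2 + M * h) / of_int q))"
  have "S0 q B M * cnj (S0 q B M) = (\<Sum>x\<in>{0..<q}. \<Sum>y\<in>{0..<q}. e (of_int (f x) / of_int q) * cnj (e (of_int (f y) / of_int q)))"
    unfolding S0_def f_def by (simp add: cnj_sum sum_product)
  also have "\<dots> = (\<Sum>x\<in>{0..<q}. \<Sum>y\<in>{0..<q}. E x y)"
    unfolding E_def by (simp add: cnj_e e_add[symmetric] diff_divide_distrib)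
  also have "\<dots> = (\<Sum>y\<in>{0..<q}. \<Sum>x\<in>{0..<q}. E x y)" by (rule sum.swap)
  also have "\<dots> = (\<Sum>y\<in>{0..<q}. \<Sum>h\<in>{0..<q}. g h * e (of_int ((2 * B * h) * y) / of_int q))"
  proof (rule sum.cong[OF refl])
    fix y
    have per: "E (x mod q) y = E x y" for x
      unfolding E_def f_def using q
      by (intro e_cong cong_diff poly_cong cong_refl) (auto simp: cong_def)
    have "(\<Sum>x\<in>{0..<q}. E x y) = (\<Sum>h\<in>{0..<q}. E (h + y) y)"
      by (rule sum_shift[symmetric]) (use q per in auto)
    also have "\<dots> = (\<Sum>h\<in>{0..<q}. g h * e (of_int ((2 * B * h) * y) / of_int q))"
    proof (rule sum.cong[OF refl])
      fix h
      have "f (h + y) - f y = (B * h^2 + M * h) + (2 * B * h) * y"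
        unfolding f_def by (simp add: power2_eq_square algebra_simps)
      then show "E (h + y) y = g h * e (of_int ((2 * B * h) * y) / of_int q)"
        unfolding E_def g_def by (simp add: e_add[symmetric] add_divide_distrib)
    qed
    finally show "(\<Sum>x\<in>{0..<q}. E x y) = (\<Sum>h\<in>{0..<q}. g h * e (of_int ((2 * B * h) * y) / of_int q))" .
  qed
  also have "\<dots> = (\<Sum>h\<in>{0..<q}. g h * (\<Sum>y\<in>{0..<q}. e (of_int ((2 * B * h) * y) / of_int q)))"
    by (subst sum.swap) (simp add: sum_distrib_left)
  also have "\<dots> = (\<Sum>h\<in>{0..<q}. if q dvd 2 * h then of_int q * g h else 0)"
  proof (rule sum.cong[OF refl])
    fix h
    have "q dvd 2 * B * h \<longleftrightarrow> q dvd 2 * h"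
    proof -
      have "2 * B * h = (2 * h) * B" by (simp add: ac_simps)
      moreover have "coprime q B" using cop by (simp add: coprime_commute)
      ultimately show ?thesis using coprime_dvd_mult_left_iff by metis
    qed
    then show "g h * (\<Sum>y\<in>{0..<q}. e (of_int ((2 * B * h) * y) / of_int q))
        = (if q dvd 2 * h then of_int q * g h else 0)"
      using geom_sum[OF q, of "2 * B * h"] by simp
  qed
  also have "\<dots> = (\<Sum>h\<in>{h\<in>{0..<q}. q dvd 2 * h}. of_int q * g h)"
    by (rule sum.inter_filter[symmetric]) simp
  also have "\<dots> = of_int q * (\<Sum>h\<in>{h\<in>{0..<q}. q dvd 2 * h}. g h)"
    by (simp add: sum_distrib_left)
  finally show ?thesis unfolding g_def .
qed

lemma dvd_2h:
  fixes q h :: int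
  assumes q: "q > 0" and h: "0 \<le> h" "h < q" and d: "q dvd 2 * h"
  shows "h = 0 \<or> 2 * h = q"
proof -
  obtain k where k: "2 * h = q * k" using d by (auto simp: dvd_def)
  have "q * k < q * 2" using k h by linarith
  then have "k < 2" using q by (simp add: mult_less_cancel_left)
  have "0 \<le> q * k" using k h by linarith
  then have "0 \<le> k" using q by (simp add: zero_le_mult_iff)
  then have "k = 0 \<or> k = 1" using \<open>k < 2\<close> by linarith
  then show ?thesis using k by auto
qed

lemma card_half:
  fixes q :: int
  assumes q: "q > 0"
  shows "card {h\<in>{0..<q}. q dvd 2 * h} \<le> (if even q then 2 else 1)"
proof -
  have sub: "{h\<in>{0..<q}. q dvd 2 * h} \<subseteq> {0, q div 2}"
    using dvd_2h[OF q] by fastforce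
  show ?thesis
  proof (cases "even q")
    case True
    have "card {h\<in>{0..<q}. q dvd 2 * h} \<le> card {0, q div 2}" by (rule card_mono[OF _ sub]) simp
    also have "\<dots> \<le> 2" by (simp add: card_insert_le_m1)
    finally show ?thesis using True by simp
  next
    case False
    have "{h\<in>{0..<q}. q dvd 2 * h} \<subseteq> {0}"
    proof
      fix h assume "h \<in> {h\<in>{0..<q}. q dvd 2 * h}"
      then have "h = 0 \<or> 2 * h = q" using dvd_2h[OF q] by auto
      then show "h \<in> {0}" using False by auto
    qed
    then have "card {h\<in>{0..<q}. q dvd 2 * h} \<le> card {0::int}" by (rule card_mono[rotated]) simp
    then show ?thesis using False by simp
  qed
qed

lemma S0_norm_sq_le:
  assumes q: "q > 0" and cop: "coprime B q"
  shows "(cmod (S0 q B M))^2 \<le> (if even q then 2 else 1) * of_int q"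
proof -
  have "complex_of_real ((cmod (S0 q B M))^2) = S0 q B M * cnj (S0 q B M)"
    by (rule complex_norm_square)
  then have "(cmod (S0 q B M))^2 = cmod (S0 q B M * cnj (S0 q B M))"
    by (metis norm_of_real abs_power2 power2_abs)
  also have "\<dots> = of_int q * cmod (\<Sum>h\<in>{h\<in>{0..<q}. q dvd 2 * h}. e (of_int (B * h^2 + M * h) / of_int q))"
    unfolding S0_normsq[OF q cop] using q by (simp add: norm_mult)
  also have "\<dots> \<le> of_int q * real (card {h\<in>{0..<q}. q dvd 2 * h})"
  proof -
    have "cmod (\<Sum>h\<in>{h\<in>{0..<q}. q dvd 2 * h}. e (of_int (B * h^2 + M * h) / of_int q))
        \<le> (\<Sum>h\<in>{h\<in>{0..<q}. q dvd 2 * h}. cmod (e (of_int (B * h^2 + M * h) / of_int q)))"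
      by (rule norm_sum)
    then show ?thesis using q by (intro mult_left_mono) auto
  qed
  also have "\<dots> \<le> of_int q * (if even q then 2 else 1)"
    using card_half[OF q] q by (intro mult_left_mono) auto
  finally show ?thesis by (simp add: mult.commute)
qed

lemma S0_odd_exact:
  assumes q: "q > 0" and odd: "odd q" and cop: "coprime B q"
  shows "S0 q B M * cnj (S0 q B M) = of_int q"
proof -
  have "{h\<in>{0..<q}. q dvd 2 * h} = {0}"
  proof
    show "{h\<in>{0..<q}. q dvd 2 * h} \<subseteq> {0}"
    proof
      fix h assume "h \<in> {h\<in>{0..<q}. q dvd 2 * h}"
      then have "h = 0 \<or> 2 * h = q" using dvd_2h[OF q] by auto
      then show "h \<in> {0}" using odd by auto
    qed
  qed (use q in auto)
  then show ?thesis unfolding S0_normsq[OF q cop] by simp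
qed

lemma norm_S0_le:
  assumes q: "q > 0" and cop: "coprime B q"
  shows "cmod (S0 q B M) \<le> sqrt ((if even q then 2 else 1) * of_int q)"
  by (rule real_le_rsqrt[OF S0_norm_sq_le[OF q cop]])

lemma coprime_even_odd:
  fixes a q :: int
  assumes "even q" "coprime a q"
  shows "odd a"
  using coprime_common_divisor[of a q 2] assms by auto

lemma card_units_even:
  fixes q :: int
  assumes q: "q > 0" and ev: "even q"
  shows "2 * card {a\<in>{0..<q}. coprime a q} \<le> nat q"
proof -
  have "card {a\<in>{0..<q}. coprime a q} \<le> card {0..<q div 2}"
  proof (rule card_inj_on_le[where f = "\<lambda>a. a div 2"])
    show "inj_on (\<lambda>a. a div 2) {a\<in>{0..<q}. coprime a q}"
    proof (rule inj_onI)
      fix a b assume a: "a \<in> {a\<in>{0..<q}. coprime a q}" and b: "b \<in> {a\<in>{0..<q}. coprime a q}"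
        and ab: "a div 2 = b div 2"
      have "odd a" using a ev by (intro coprime_even_odd) auto
      moreover have "odd b" using b ev by (intro coprime_even_odd) auto
      ultimately show "a = b" using ab by (metis odd_two_times_div_two_succ)
    qed
    show "(\<lambda>a. a div 2) ` {a\<in>{0..<q}. coprime a q} \<subseteq> {0..<q div 2}"
    proof
      fix x assume "x \<in> (\<lambda>a. a div 2) ` {a\<in>{0..<q}. coprime a q}"
      then obtain a where a: "a \<in> {0..<q}" "coprime a q" "x = a div 2" by auto
      have "odd a" using a ev by (intro coprime_even_odd) auto
      then show "x \<in> {0..<q div 2}" using a ev by auto
    qed
  qed simp
  also have "card {0..<q div 2} = nat (q div 2)" by simp
  finally show ?thesis using ev q by auto
qed




lemma V_bound_trivial:
  assumes q: "q > 0" and cop: "coprime c q"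
  shows "cmod (V q c n1 n2 n3 m) \<le> (if even q then sqrt 2 else 1) * (of_int q)^2 * sqrt (of_int q)"
proof -
  define U where "U = {a\<in>{0..<q}. coprime a q}"
  define s where "s = sqrt ((if even q then 2 else 1) * (of_int q :: real))"
  have s0: "s \<ge> 0" unfolding s_def using q by simp
  have trm: "cmod (S0 q (c * a) n1 * S0 q (c * a) n2 * S0 q (c * a) n3 * e (of_int (inv_mod q a * m) / of_int q))
      \<le> s ^ 3" if "a \<in> U" for a
  proof -
    have ca: "coprime (c * a) q" using that cop unfolding U_def by simp
    have b: "cmod (S0 q (c * a) n) \<le> s" for n unfolding s_def by (rule norm_S0_le[OF q ca])
    have "cmod (S0 q (c * a) n1 * S0 q (c * a) n2 * S0 q (c * a) n3 * e (of_int (inv_mod q a * m) / of_int q))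
        = cmod (S0 q (c * a) n1) * cmod (S0 q (c * a) n2) * cmod (S0 q (c * a) n3)"
      by (simp add: norm_mult)
    also have "\<dots> \<le> s * s * s" using b s0 by (intro mult_mono) auto
    finally show ?thesis by (simp add: power3_eq_cube)
  qed
  have "cmod (V q c n1 n2 n3 m) \<le> (\<Sum>a\<in>U. s ^ 3)"
    unfolding V_def U_def[symmetric]
    by (rule order_trans[OF norm_sum sum_mono]) (use trm in auto)
  also have "\<dots> = real (card U) * s ^ 3" by simp
  also have "\<dots> \<le> (if even q then sqrt 2 else 1) * (of_int q)^2 * sqrt (of_int q)"
  proof (cases "even q")
    case True
    have c2: "2 * real (card U) \<le> of_int q"
      using card_units_even[OF q True] q unfolding U_def by linarith
    have "s = sqrt 2 * sqrt (of_int q)" unfolding s_def using True by (simp add: real_sqrt_mult)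
    then have s3: "s ^ 3 = 2 * of_int q * (sqrt 2 * sqrt (of_int q))"
      using q by (simp add: power3_eq_cube algebra_simps)
    have "real (card U) * s ^ 3 = (2 * real (card U)) * (of_int q * (sqrt 2 * sqrt (of_int q)))"
      unfolding s3 by (simp add: algebra_simps)
    also have "\<dots> \<le> of_int q * (of_int q * (sqrt 2 * sqrt (of_int q)))"
      using c2 q by (intro mult_right_mono) auto
    finally show ?thesis using True by (simp add: power2_eq_square algebra_simps)
  next
    case False
    have "card U \<le> card {0..<q}" unfolding U_def by (rule card_mono) auto
    then have c1: "real (card U) \<le> of_int q" using q by simp
    have s3: "s ^ 3 = of_int q * sqrt (of_int q)"
      unfolding s_def using False q by (simp add: power3_eq_cube)
    have "real (card U) * s ^ 3 \<le> of_int q * s ^ 3"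
      using c1 s0 by (intro mult_right_mono) auto
    then show ?thesis using False unfolding s3 by (simp add: power2_eq_square algebra_simps)
  qed
  finally show ?thesis .
qed




lemma small_dvd_zero:
  fixes p d :: int
  assumes "p > 2" "p dvd d" "\<bar>d\<bar> \<le> 2"
  shows "d = 0"
  using dvd_imp_le_int[of d p] assms by fastforce

context
  fixes p :: int
  assumes pp: "prime p" and p2: "p > 2"
begin

definition L :: "int \<Rightarrow> int" where "L t = Legendre t p"

lemma p0: "p > 0" using p2 by simp

lemma L_cases: "L t = 0 \<or> L t = 1 \<or> L t = -1"
  unfolding L_def Legendre_def by auto

lemma L_zero: "L t = 0 \<longleftrightarrow> p dvd t"
  unfolding L_def Legendre_def by (auto simp: cong_0_iff)

lemma L_cong: "[t = t'] (mod p) \<Longrightarrow> L t = L t'"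
  unfolding L_def Legendre_def QuadRes_def cong_def by auto

lemma L_mod: "L (t mod p) = L t"
  by (rule L_cong) (simp add: cong_def)

lemma L_mult: "L (x * y) = L x * L y"
proof -
  have pn: "prime (nat p)" using pp by (simp add: prime_nat_iff_prime)
  have p2': "2 < nat p" using p2 by simp
  have ip: "int (nat p) = p" using p2 by simp
  let ?k = "(nat p - 1) div 2"
  have ex: "[L z = z ^ ?k] (mod p)" for z
    using euler_criterion[OF pn p2', of z] unfolding L_def ip .
  have "[L (x * y) = (x * y) ^ ?k] (mod p)" by (rule ex)
  moreover have "[L x * L y = x ^ ?k * y ^ ?k] (mod p)" by (intro cong_mult ex)
  ultimately have "[L (x * y) = L x * L y] (mod p)"
    by (metis cong_sym cong_trans power_mult_distrib)
  then have "p dvd (L (x * y) - L x * L y)" by (simp add: cong_iff_dvd_diff)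
  moreover have "\<bar>L (x * y) - L x * L y\<bar> \<le> 2"
    using L_cases[of "x * y"] L_cases[of x] L_cases[of y] by auto
  ultimately show ?thesis using small_dvd_zero[OF p2] by fastforce
qed

lemma L_1: "L 1 = 1"
proof -
  have "\<not> [1 = 0] (mod p)" using p2 by (simp add: cong_0_iff)
  moreover have "QuadRes p 1" unfolding QuadRes_def by (rule exI[of _ 1]) simp
  ultimately show ?thesis unfolding L_def Legendre_def by simp
qed

lemma L_sq: "\<not> p dvd t \<Longrightarrow> L t * L t = 1"
  using L_cases[of t] L_zero[of t] by auto

lemma L_cube: "L t ^ 3 = L t"
  using L_cases[of t] by auto

lemma prime_sq_roots:
  assumes "[x^2 = y^2] (mod p)"
  shows "[x = y] (mod p) \<or> [x = - y] (mod p)"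
proof -
  have "p dvd (x - y) * (x + y)"
    using assms by (simp add: cong_iff_dvd_diff power2_eq_square algebra_simps)
  then have "p dvd (x - y) \<or> p dvd (x + y)" using pp prime_dvd_mult_iff by blast
  then show ?thesis by (auto simp: cong_iff_dvd_diff)
qed

lemma R_card: "card {x\<in>{0..<p}. [x^2 = t] (mod p)} = nat (1 + L t)"
proof (cases "p dvd t")
  case True
  have "{x\<in>{0..<p}. [x^2 = t] (mod p)} = {0}"
  proof
    show "{x\<in>{0..<p}. [x^2 = t] (mod p)} \<subseteq> {0}"
    proof
      fix x assume x: "x \<in> {x\<in>{0..<p}. [x^2 = t] (mod p)}"
      then have "p dvd x^2" using True by (simp add: cong_iff_dvd_diff) (metis dvd_add_left_iff diff_add_cancel)
      then have "p dvd x" using pp prime_dvd_power_int by blast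
      then show "x \<in> {0}" using x by (auto simp: zdvd_not_zless dest: zdvd_imp_le)
    qed
    show "{0} \<subseteq> {x\<in>{0..<p}. [x^2 = t] (mod p)}" using True p0 by (simp add: cong_iff_dvd_diff)
  qed
  then show ?thesis using L_zero[of t] True by simp
next
  case False
  show ?thesis
  proof (cases "QuadRes p t")
    case True
    then obtain y where y: "[y^2 = t] (mod p)" unfolding QuadRes_def by blast
    have Lt: "L t = 1" using True False unfolding L_def Legendre_def by (simp add: cong_0_iff)
    have ny: "\<not> p dvd y"
    proof
      assume "p dvd y"
      then have "p dvd y^2" by (simp add: power2_eq_square)
      moreover have "p dvd y^2 - t" using y by (simp add: cong_iff_dvd_diff)
      ultimately have "p dvd y^2 - (y^2 - t)" using dvd_diff by blast
      then show False using False by simp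
    qed
    have "{x\<in>{0..<p}. [x^2 = t] (mod p)} = {y mod p, (- y) mod p}"
    proof
      show "{x\<in>{0..<p}. [x^2 = t] (mod p)} \<subseteq> {y mod p, (- y) mod p}"
      proof
        fix x assume x: "x \<in> {x\<in>{0..<p}. [x^2 = t] (mod p)}"
        then have "[x^2 = y^2] (mod p)" using y cong_sym cong_trans by blast
        then have "[x = y] (mod p) \<or> [x = - y] (mod p)" by (rule prime_sq_roots)
        then show "x \<in> {y mod p, (- y) mod p}" using x by (auto simp: cong_def)
      qed
      show "{y mod p, (- y) mod p} \<subseteq> {x\<in>{0..<p}. [x^2 = t] (mod p)}"
      proof -
        have "[(y mod p)^2 = y^2] (mod p)" by (intro cong_pow) (simp add: cong_def)
        moreover have "[((- y) mod p)^2 = y^2] (mod p)"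
        proof -
          have "[((- y) mod p)^2 = (- y)^2] (mod p)" by (intro cong_pow) (simp add: cong_def)
          then show ?thesis by simp
        qed
        ultimately show ?thesis using y p0 cong_trans by auto
      qed
    qed
    moreover have "y mod p \<noteq> (- y) mod p"
    proof
      assume "y mod p = (- y) mod p"
      then have "p dvd y - (- y)" by (simp add: mod_eq_dvd_iff)
      then have "p dvd 2 * y" by simp
      then have "p dvd 2 \<or> p dvd y" using pp prime_dvd_mult_iff by blast
      moreover have "\<not> p dvd 2" using p2 zdvd_imp_le[of p 2] by auto
      ultimately show False using ny by blast
    qed
    ultimately show ?thesis using Lt by simp
  next
    case nq: False
    have Lt: "L t = -1" using nq False unfolding L_def Legendre_def by (simp add: cong_0_iff)
    have E0: "{x\<in>{0..<p}. [x^2 = t] (mod p)} = {}" using nq unfolding QuadRes_def by auto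
    show ?thesis unfolding E0 Lt by simp
  qed
qed

definition G :: "int \<Rightarrow> complex" where "G d = S0 p d 0"
definition H :: "int \<Rightarrow> complex" where
  "H d = (\<Sum>t\<in>{0..<p}. of_int (L t) * e (of_int (d * t) / of_int p))"

lemma G_R: "G d = (\<Sum>t\<in>{0..<p}. of_int (1 + L t) * e (of_int (d * t) / of_int p))"
proof -
  define h where "h = (\<lambda>x. e (of_int (d * (x^2 mod p)) / of_int p))"
  have "G d = (\<Sum>x\<in>{0..<p}. h x)"
    unfolding G_def S0_def h_def
    by (rule sum.cong[OF refl], rule e_cong) (use p0 in \<open>auto simp: cong_def mod_mult_right_eq\<close>)
  also have "\<dots> = (\<Sum>t\<in>{0..<p}. sum h {x\<in>{0..<p}. x^2 mod p = t})"
    by (rule sum.group[symmetric]) (use p0 in auto)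
  also have "\<dots> = (\<Sum>t\<in>{0..<p}. of_int (1 + L t) * e (of_int (d * t) / of_int p))"
  proof (rule sum.cong[OF refl])
    fix t assume t: "t \<in> {0..<p}"
    have eqset: "{x\<in>{0..<p}. x^2 mod p = t} = {x\<in>{0..<p}. [x^2 = t] (mod p)}"
      using t by (auto simp: cong_def)
    have "sum h {x\<in>{0..<p}. x^2 mod p = t} = (\<Sum>x\<in>{x\<in>{0..<p}. x^2 mod p = t}. e (of_int (d * t) / of_int p))"
      unfolding h_def by (rule sum.cong) auto
    also have "\<dots> = of_nat (card {x\<in>{0..<p}. [x^2 = t] (mod p)}) * e (of_int (d * t) / of_int p)"
      unfolding eqset by simp
    also have "\<dots> = of_int (1 + L t) * e (of_int (d * t) / of_int p)"
      unfolding R_card using L_cases[of t] by auto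
    finally show "sum h {x\<in>{0..<p}. x^2 mod p = t} = of_int (1 + L t) * e (of_int (d * t) / of_int p)" .
  qed
  finally show ?thesis .
qed

lemma H_G: "H d = G d - (if p dvd d then of_int p else 0)"
proof -
  have "G d = (\<Sum>t\<in>{0..<p}. e (of_int (d * t) / of_int p)) + H d"
    unfolding G_R H_def by (simp add: distrib_right sum.distrib)
  then show ?thesis using geom_sum[OF p0, of d] by simp
qed

lemma H_mult:
  assumes nd: "\<not> p dvd d"
  shows "H d = of_int (L d) * H 1"
proof -
  define F where "F = (\<lambda>t. of_int (L t) * e (of_int t / of_int p))"
  have per: "F (x mod p) = F x" for x
    unfolding F_def using L_mod e_mod p0 by simp
  have cop: "coprime d p" using nd pp prime_imp_coprime coprime_commute by blast
  have "H 1 = (\<Sum>t\<in>{0..<p}. F t)" unfolding H_def F_def by simp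
  also have "\<dots> = (\<Sum>t\<in>{0..<p}. F (d * t))" by (rule sum_mult[symmetric]) (use p0 per cop in auto)
  also have "\<dots> = of_int (L d) * H d"
    unfolding F_def H_def by (simp add: L_mult sum_distrib_left mult.assoc)
  finally have "H 1 = of_int (L d) * H d" .
  then have "of_int (L d) * H 1 = of_int (L d * L d) * H d" by (simp add: mult.assoc)
  then show ?thesis using L_sq[OF nd] by simp
qed

lemma G_unit:
  assumes "\<not> p dvd b"
  shows "G b = of_int (L b) * G 1"
proof -
  have n1: "\<not> p dvd 1" using p2 by auto
  have "G b = H b" using H_G[of b] assms by simp
  also have "\<dots> = of_int (L b) * H 1" by (rule H_mult[OF assms])
  also have "H 1 = G 1" using H_G[of 1] n1 by simp
  finally show ?thesis .
qed

lemma norm_G_unit: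
  assumes "\<not> p dvd b"
  shows "cmod (G b) = sqrt (of_int p)"
proof -
  have cop: "coprime b p" using assms pp prime_imp_coprime coprime_commute by blast
  have odd: "odd p" using pp p2 by (metis prime_odd_int)
  have "complex_of_real ((cmod (G b))^2) = of_int p"
    unfolding complex_norm_square G_def by (rule S0_odd_exact[OF p0 odd cop])
  then have "(cmod (G b))^2 = of_int p" by (metis of_real_eq_iff of_real_of_int_eq)
  then show ?thesis by (metis norm_ge_zero real_sqrt_unique)
qed

lemma norm_H: "cmod (H d) \<le> sqrt (of_int p)"
proof (cases "p dvd d")
  case True
  have "G d = (\<Sum>x\<in>{0..<p}. 1)"
    unfolding G_def S0_def
  proof (rule sum.cong[OF refl])
    fix x
    have "p dvd d * x^2" using True by simp
    then have "e (of_int (d * x^2) / of_int p) = 1" using e_eq_1_iff[OF p0] by blast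
    then show "e (of_int (d * x^2 + 0 * x) / of_int p) = 1" by simp
  qed
  then have "G d = of_int p" using p0 by simp
  then have "H d = 0" using H_G[of d] True by simp
  then show ?thesis using p0 by simp
next
  case False
  then show ?thesis using H_G[of d] norm_G_unit[OF False] by simp
qed

lemma complete_square:
  assumes k: "[4 * b * k = 1] (mod p)"
  shows "S0 p b n = e (of_int (- (k * n^2)) / of_int p) * G b"
proof -
  have "S0 p b n = (\<Sum>x\<in>{0..<p}. e (of_int (- (k * n^2)) / of_int p) * e (of_int (b * (x + 2 * k * n)^2 + 0 * (x + 2 * k * n)) / of_int p))"
    unfolding S0_def
  proof (rule sum.cong[OF refl])
    fix x
    have "p dvd 4 * b * k - 1" using k by (simp add: cong_iff_dvd_diff)
    then have "p dvd (4 * b * k - 1) * (n * x + k * n^2)" by simp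
    moreover have "(4 * b * k - 1) * (n * x + k * n^2) = (- (k * n^2) + b * (x + 2 * k * n)^2) - (b * x^2 + n * x)"
      by (simp add: power2_eq_square algebra_simps)
    ultimately have "[b * x^2 + n * x = - (k * n^2) + (b * (x + 2 * k * n)^2 + 0 * (x + 2 * k * n))] (mod p)"
      by (simp add: cong_iff_dvd_diff dvd_diff_commute)
    then have "e (of_int (b * x^2 + n * x) / of_int p) = e (of_int (- (k * n^2) + (b * (x + 2 * k * n)^2 + 0 * (x + 2 * k * n))) / of_int p)"
      using p0 by (intro e_cong) auto
    then show "e (of_int (b * x^2 + n * x) / of_int p) = e (of_int (- (k * n^2)) / of_int p) * e (of_int (b * (x + 2 * k * n)^2 + 0 * (x + 2 * k * n)) / of_int p)"
      by (simp only: of_int_add add_divide_distrib e_add)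
  qed
  also have "\<dots> = e (of_int (- (k * n^2)) / of_int p) * (\<Sum>x\<in>{0..<p}. e (of_int (b * (x + 2 * k * n)^2 + 0 * (x + 2 * k * n)) / of_int p))"
    by (simp add: sum_distrib_left)
  also have "(\<Sum>x\<in>{0..<p}. e (of_int (b * (x + 2 * k * n)^2 + 0 * (x + 2 * k * n)) / of_int p)) = G b"
    unfolding G_def S0_def
    by (rule sum_shift[where f = "\<lambda>x. e (of_int (b * x^2 + 0 * x) / of_int p)"], rule p0, rule S0_summand_per[OF p0])
  finally show ?thesis .
qed

end




lemma coprime_prime_ndvd:
  fixes p x :: int
  assumes "prime p" "coprime x p"
  shows "\<not> p dvd x"
  using coprime_common_divisor[of x p p] assms not_prime_unit by auto

lemma e4:
  "e (of_int A / of_int p) * e (of_int B / of_int p) * e (of_int C / of_int p) * e (of_int D / of_int p)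
   = e (of_int (A + B + C + D) / of_int p)"
  by (simp add: e_add[symmetric] add_divide_distrib)

lemma W_H:
  assumes pp: "prime p" and p2: "p > 2"
  shows "(\<Sum>a\<in>{a\<in>{0..<p}. coprime a p}. of_int (L p a) * e (of_int (inv_mod p a * d) / of_int p)) = H p d"
proof -
  have p0: "p > 0" using p2 by simp
  define U where "U = {a\<in>{0..<p}. coprime a p}"
  define j where "j = (\<lambda>a. inv_mod p a mod p)"
  have key: "j a \<in> U \<and> j (j a) = a \<and> of_int (L p (j a)) * e (of_int (d * j a) / of_int p)
        = of_int (L p a) * e (of_int (inv_mod p a * d) / of_int p)" if a: "a \<in> U" for a
  proof -
    have ca: "coprime a p" and ar: "0 \<le> a" "a < p" using a unfolding U_def by auto
    have hab: "[a * inv_mod p a = 1] (mod p)" by (rule inv_mod_cong[OF ca])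
    have hba: "[inv_mod p a * a = 1] (mod p)" using hab by (simp add: mult.commute)
    have cb: "coprime (inv_mod p a) p" using hba coprime_iff_invertible_int by blast
    have jU: "j a \<in> U" unfolding U_def j_def using cb p0 coprime_mod_left_iff by auto
    have "[inv_mod p (inv_mod p a mod p) = inv_mod p (inv_mod p a)] (mod p)" by (rule inv_mod_mod[OF p0 cb])
    moreover have "[inv_mod p (inv_mod p a) = a] (mod p)" by (rule inv_unique[OF inv_mod_cong[OF cb] hba])
    ultimately have "[inv_mod p (inv_mod p a mod p) = a] (mod p)" using cong_trans by blast
    then have jj: "j (j a) = a" unfolding j_def using ar by (simp add: cong_def)
    have nd: "\<not> p dvd a" by (rule coprime_prime_ndvd[OF pp ca])
    have "L p a * L p (inv_mod p a) = L p (a * inv_mod p a)" using L_mult[OF pp p2] by simp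
    also have "\<dots> = L p 1" by (rule L_cong[OF pp p2 hab])
    also have "\<dots> = 1" by (rule L_1[OF pp p2])
    finally have "L p a * L p (inv_mod p a) = 1" .
    then have Lb: "L p (inv_mod p a) = L p a" using L_sq[OF pp p2 nd] L_cases[OF pp p2, of a] by auto
    have "L p (j a) = L p a" unfolding j_def using L_mod[OF pp p2] Lb by simp
    moreover have "e (of_int (d * j a) / of_int p) = e (of_int (inv_mod p a * d) / of_int p)"
      unfolding j_def using p0 by (intro e_cong) (auto simp: cong_def mod_mult_right_eq mult.commute)
    ultimately show ?thesis using jU jj by simp
  qed
  have "(\<Sum>a\<in>U. of_int (L p a) * e (of_int (inv_mod p a * d) / of_int p))
      = (\<Sum>b\<in>U. of_int (L p b) * e (of_int (d * b) / of_int p))"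
    by (rule sum.reindex_bij_witness[where i = j and j = j]) (use key in auto)
  also have "\<dots> = H p d"
    unfolding H_def[OF pp p2]
  proof (rule sum.mono_neutral_right[symmetric])
    show "U \<subseteq> {0..<p}" unfolding U_def by auto
    show "\<forall>t\<in>{0..<p} - U. of_int (L p t) * e (of_int (d * t) / of_int p) = 0"
    proof
      fix t assume "t \<in> {0..<p} - U"
      then have "\<not> coprime t p" unfolding U_def by auto
      then have "p dvd t" using pp prime_imp_coprime coprime_commute by blast
      then show "of_int (L p t) * e (of_int (d * t) / of_int p) = 0" using L_zero[OF pp p2] by simp
    qed
  qed simp
  finally show ?thesis unfolding U_def .
qed

lemma V_prime:
  assumes pp: "prime p" and p2: "p > 2" and cc: "coprime c p"
  shows "cmod (V p c n1 n2 n3 m) \<le> (of_int p)^2"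
proof -
  have p0: "p > 0" using p2 by simp
  define U where "U = {a\<in>{0..<p}. coprime a p}"
  have n4: "\<not> p dvd 4"
  proof
    assume "p dvd 4"
    then have "p dvd 2 * 2" by simp
    then have "p dvd 2" using pp prime_dvd_mult_iff by blast
    then show False using p2 zdvd_imp_le[of p 2] by auto
  qed
  have c4: "coprime (4 * c) p"
    using cc prime_imp_coprime[OF pp n4] by (simp add: coprime_commute)
  define k0 where "k0 = inv_mod p (4 * c)"
  have hk: "[4 * c * k0 = 1] (mod p)" unfolding k0_def by (rule inv_mod_cong[OF c4])
  define d where "d = m - k0 * (n1^2 + n2^2 + n3^2)"
  define G1 where "G1 = G p 1"
  have summ: "S0 p (c * a) n1 * S0 p (c * a) n2 * S0 p (c * a) n3 * e (of_int (inv_mod p a * m) / of_int p)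
      = of_int (L p c) * G1^3 * (of_int (L p a) * e (of_int (inv_mod p a * d) / of_int p))"
    if a: "a \<in> U" for a
  proof -
    have ca: "coprime a p" using a unfolding U_def by auto
    define ab where "ab = inv_mod p a"
    have hab: "[a * ab = 1] (mod p)" unfolding ab_def by (rule inv_mod_cong[OF ca])
    have hk2: "[4 * (c * a) * (k0 * ab) = 1] (mod p)"
    proof -
      have "[(4 * c * k0) * (a * ab) = 1 * 1] (mod p)" by (rule cong_mult[OF hk hab])
      then show ?thesis by (simp add: ac_simps)
    qed
    have nca: "\<not> p dvd c * a"
      using coprime_prime_ndvd[OF pp] cc ca by (simp add: coprime_mult_left_iff)
    have Gca: "G p (c * a) = of_int (L p c * L p a) * G1"
      unfolding G1_def using G_unit[OF pp p2 nca] L_mult[OF pp p2] by simp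
    have S: "S0 p (c * a) n = e (of_int (- (k0 * ab * n^2)) / of_int p) * (of_int (L p c * L p a) * G1)" for n
      using complete_square[OF pp p2 hk2, of n] Gca by (simp add: mult.assoc)
    have ee: "e (of_int (- (k0 * ab * n1^2)) / of_int p) * e (of_int (- (k0 * ab * n2^2)) / of_int p)
        * e (of_int (- (k0 * ab * n3^2)) / of_int p) * e (of_int (ab * m) / of_int p)
        = e (of_int (ab * d) / of_int p)"
      unfolding e4 d_def by (simp add: algebra_simps)
    have LL: "(of_int (L p c * L p a) :: complex)^3 = of_int (L p c * L p a)"
      using L_cube[OF pp p2, of c] L_cube[OF pp p2, of a]
      by (metis of_int_power power_mult_distrib)
    define s where "s = (of_int (L p c * L p a) :: complex)"
    define X1 where "X1 = e (of_int (- (k0 * ab * n1^2)) / of_int p)"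
    define X2 where "X2 = e (of_int (- (k0 * ab * n2^2)) / of_int p)"
    define X3 where "X3 = e (of_int (- (k0 * ab * n3^2)) / of_int p)"
    define E where "E = e (of_int (ab * m) / of_int p)"
    have "(X1 * (s * G1)) * (X2 * (s * G1)) * (X3 * (s * G1)) * E = (X1 * X2 * X3 * E) * s^3 * G1^3"
      by (simp add: power3_eq_cube algebra_simps)
    also have "\<dots> = e (of_int (ab * d) / of_int p) * s * G1^3"
      using ee LL unfolding X1_def X2_def X3_def E_def s_def by simp
    also have "\<dots> = of_int (L p c) * G1^3 * (of_int (L p a) * e (of_int (ab * d) / of_int p))"
      unfolding s_def by (simp add: algebra_simps)
    finally show ?thesis
      unfolding S ab_def[symmetric] X1_def[symmetric] X2_def[symmetric] X3_def[symmetric] E_def[symmetric] s_def[symmetric] .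
  qed
  have "V p c n1 n2 n3 m = (\<Sum>a\<in>U. of_int (L p c) * G1^3 * (of_int (L p a) * e (of_int (inv_mod p a * d) / of_int p)))"
    unfolding V_def U_def[symmetric] by (rule sum.cong[OF refl]) (rule summ)
  also have "\<dots> = of_int (L p c) * G1^3 * H p d"
  proof -
    have W: "(\<Sum>a\<in>U. of_int (L p a) * e (of_int (inv_mod p a * d) / of_int p)) = H p d"
      unfolding U_def by (rule W_H[OF pp p2])
    show ?thesis unfolding sum_distrib_left[symmetric] W ..
  qed
  finally have V: "V p c n1 n2 n3 m = of_int (L p c) * G1^3 * H p d" .
  have nc: "\<not> p dvd c" by (rule coprime_prime_ndvd[OF pp cc])
  have n1: "\<not> p dvd 1" using p2 by auto
  have "cmod (V p c n1 n2 n3 m) = \<bar>of_int (L p c)\<bar> * (cmod G1)^3 * cmod (H p d)"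
    unfolding V by (simp add: norm_mult norm_power)
  also have "\<bar>(of_int (L p c) :: real)\<bar> = 1" using L_cases[OF pp p2, of c] L_zero[OF pp p2, of c] nc by auto
  also have "cmod G1 = sqrt (of_int p)" unfolding G1_def by (rule norm_G_unit[OF pp p2 n1])
  also have "1 * (sqrt (of_int p))^3 * cmod (H p d) \<le> 1 * (sqrt (of_int p))^3 * sqrt (of_int p)"
    using norm_H[OF pp p2, of d] p0 by (intro mult_left_mono) auto
  also have "1 * (sqrt (of_int p))^3 * sqrt (of_int p) = (of_int p)^2"
  proof -
    have "(sqrt (of_int p))^3 * sqrt (of_int p) = (sqrt (of_int p))^2 * (sqrt (of_int p))^2"
      by (simp only: power2_eq_square power3_eq_cube ac_simps)
    also have "\<dots> = (of_int p)^2" using p0 by (simp add: power2_eq_square)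
    finally show ?thesis by simp
  qed
  finally show ?thesis .
qed




lemma V_one: "V 1 c n1 n2 n3 m = 1"
proof -
  have U: "{a\<in>{0..<(1::int)}. coprime a 1} = {0}" by auto
  have Z: "{0..<(1::int)} = {0}" by auto
  have S: "S0 1 B M = 1" for B M unfolding S0_def Z by simp
  show ?thesis unfolding V_def U using e_int[of "inv_mod 1 0 * m"] by (simp add: S)
qed

lemma bezout_coprime:
  fixes a b :: int
  assumes "coprime a b"
  obtains r1 r2 where "r1 * b + r2 * a = 1"
proof -
  obtain u v where "u * b + v * a = gcd b a" using bezout_int by blast
  then show ?thesis using that assms by (simp add: coprime_iff_gcd_eq_1 gcd.commute)
qed

lemma coprime_bezout_left:
  fixes r1 r2 a b :: int
  assumes "r1 * b + r2 * a = 1"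
  shows "coprime r1 a"
proof (rule coprimeI)
  fix x assume "x dvd r1" "x dvd a"
  then have "x dvd r1 * b + r2 * a" by simp
  then show "is_unit x" using assms by simp
qed

lemma V_sqfree:
  fixes n :: nat
  assumes "squarefree n" "n \<ge> 1" "coprime c (int n)"
  shows "cmod (V (int n) c n1 n2 n3 m) \<le> (if even n then 2 else 1) * (real n)^2"
  using assms
proof (induction n arbitrary: c n1 n2 n3 m rule: less_induct)
  case (less n)
  show ?case
  proof (cases "n = 1")
    case True
    then show ?thesis by (simp add: V_one)
  next
    case False
    obtain p where p: "prime p" "p dvd n" using prime_factor_nat[OF False] by blast
    obtain n' where n': "n = p * n'" using p(2) by (auto simp: dvd_def)
    have n'1: "n' \<ge> 1" using less.prems(2) n' by (cases n') auto
    have np: "\<not> p dvd n'"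
    proof
      assume "p dvd n'"
      then have "p^2 dvd n" using n' by (auto simp: power2_eq_square)
      then have "p dvd 1" using less.prems(1) unfolding squarefree_def by auto
      then show False using p(1) by simp
    qed
    have cop_nat: "coprime p n'" using prime_imp_coprime[OF p(1) np] .
    have p2: "p \<ge> 2" using prime_ge_2_nat[OF p(1)] .
    have lt: "n' < n" using n' p2 n'1 by simp
    have sq': "squarefree n'" using squarefree_mono[of n' n] less.prems(1) n' by simp
    define P where "P = int p"
    define N where "N = int n'"
    have P0: "P > 0" and N0: "N > 0" unfolding P_def N_def using p2 n'1 by auto
    have cPN: "coprime P N" unfolding P_def N_def using cop_nat by simp
    obtain r1 r2 where r: "r1 * N + r2 * P = 1" using bezout_coprime[OF cPN] by blast
    have cc: "coprime c P" "coprime c N"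
      using less.prems(3) unfolding n' P_def N_def by (auto simp: coprime_mult_right_iff)
    have cr1: "coprime (r1 * c) P"
      using coprime_bezout_left[OF r] cc(1) by (simp add: coprime_mult_left_iff)
    have r': "r2 * P + r1 * N = 1" using r by simp
    have cr2: "coprime (r2 * c) N"
      using coprime_bezout_left[OF r'] cc(2) by (simp add: coprime_mult_left_iff)
    have V: "V (int n) c n1 n2 n3 m = V P (r1 * c) (r1 * n1) (r1 * n2) (r1 * n3) (r1 * m)
                  * V N (r2 * c) (r2 * n1) (r2 * n2) (r2 * n3) (r2 * m)"
      unfolding n' of_nat_mult P_def[symmetric] N_def[symmetric]
      by (rule V_crt[OF P0 N0 cPN r])
    have BN: "cmod (V N (r2 * c) (r2 * n1) (r2 * n2) (r2 * n3) (r2 * m)) \<le> (if even n' then 2 else 1) * (real n')^2"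
      unfolding N_def by (rule less.IH[OF lt sq' n'1]) (use cr2 N_def in simp)
    have BP: "cmod (V P (r1 * c) (r1 * n1) (r1 * n2) (r1 * n3) (r1 * m)) \<le> (if p = 2 then 2 else 1) * (real p)^2"
    proof (cases "p = 2")
      case True
      have "cmod (V P (r1 * c) (r1 * n1) (r1 * n2) (r1 * n3) (r1 * m))
          \<le> (if even P then sqrt 2 else 1) * (of_int P)^2 * sqrt (of_int P)"
        by (rule V_bound_trivial[OF P0 cr1])
      also have "\<dots> = 8" using True unfolding P_def by (simp add: power2_eq_square)
      finally show ?thesis using True by simp
    next
      case False
      have pP: "prime P" unfolding P_def using p(1) by simp
      have "P > 2" using p2 False unfolding P_def by simp
      then have "cmod (V P (r1 * c) (r1 * n1) (r1 * n2) (r1 * n3) (r1 * m)) \<le> (of_int P)^2"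
        by (rule V_prime[OF pP _ cr1])
      then show ?thesis using False unfolding P_def by simp
    qed
    have "cmod (V (int n) c n1 n2 n3 m)
        \<le> ((if p = 2 then 2 else 1) * (real p)^2) * ((if even n' then 2 else 1) * (real n')^2)"
      unfolding V norm_mult by (rule mult_mono[OF BP BN]) auto
    also have "\<dots> \<le> (if even n then 2 else 1) * (real n)^2"
    proof (cases "p = 2")
      case True
      then have "odd n'" using np by auto
      then show ?thesis using True n' by (simp add: power2_eq_square)
    next
      case False
      have "odd p"
      proof
        assume "even p"
        then have "2 dvd p" by simp
        moreover have "\<forall>m. m dvd p \<longrightarrow> m = 1 \<or> m = p" using p(1) by (simp add: prime_nat_iff)
        ultimately have "2 = p" by fastforce
        then show False using False by simp
      qed
      then have "even n \<longleftrightarrow> even n'" using n' by simp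
      then show ?thesis using False n' by (simp add: power2_eq_square)
    qed
    finally show ?thesis .
  qed
qed

theorem lemma3p8:
  fixes q1 q2 :: nat and n1 n2 n3 m :: int
  assumes "q1 \<ge> 1" "q2 \<ge> 1" "coprime q1 q2" "squarefree q1" "squarefull q2"
  shows "cmod (T (int (q1 * q2)) n1 n2 n3 m)
           \<le> 4 * real q1 ^ 2 * real q2 powr (5/2)"
proof -
  define Q1 where "Q1 = int q1"
  define Q2 where "Q2 = int q2"
  have Q10: "Q1 > 0" and Q20: "Q2 > 0" unfolding Q1_def Q2_def using assms by auto
  have cQ: "coprime Q1 Q2" unfolding Q1_def Q2_def using assms(3) by simp
  obtain r1 r2 where r: "r1 * Q2 + r2 * Q1 = 1" using bezout_coprime[OF cQ] by blast
  have r': "r2 * Q1 + r1 * Q2 = 1" using r by simp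
  have cr1: "coprime (r1 * 1) Q1" using coprime_bezout_left[OF r] by simp
  have cr2: "coprime (r2 * 1) Q2" using coprime_bezout_left[OF r'] by simp
  have "T (int (q1 * q2)) n1 n2 n3 m = V (Q1 * Q2) 1 n1 n2 n3 m"
    unfolding Q1_def Q2_def of_nat_mult using Q10 Q20 unfolding Q1_def Q2_def by (intro T_V) simp
  also have "\<dots> = V Q1 (r1 * 1) (r1 * n1) (r1 * n2) (r1 * n3) (r1 * m)
                  * V Q2 (r2 * 1) (r2 * n1) (r2 * n2) (r2 * n3) (r2 * m)"
    by (rule V_crt[OF Q10 Q20 cQ r])
  finally have TV: "T (int (q1 * q2)) n1 n2 n3 m = \<dots>" .
  have B1: "cmod (V Q1 (r1 * 1) (r1 * n1) (r1 * n2) (r1 * n3) (r1 * m)) \<le> (if even q1 then 2 else 1) * (real q1)^2"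
    unfolding Q1_def by (rule V_sqfree[OF assms(4) assms(1)]) (use cr1 Q1_def in simp)
  have B2: "cmod (V Q2 (r2 * 1) (r2 * n1) (r2 * n2) (r2 * n3) (r2 * m))
      \<le> (if even Q2 then sqrt 2 else 1) * (of_int Q2)^2 * sqrt (of_int Q2)"
    by (rule V_bound_trivial[OF Q20 cr2])
  have pw: "real q2 powr (5/2) = (real q2)^2 * sqrt (real q2)"
  proof -
    have "real q2 powr (5/2) = real q2 powr (real 2 + 1/2)" by simp
    also have "\<dots> = real q2 powr (real 2) * real q2 powr (1/2)" by (rule powr_add)
    also have "\<dots> = (real q2)^2 * sqrt (real q2)"
      using assms(2) by (simp add: powr_realpow powr_half_sqrt)
    finally show ?thesis .
  qed
  have s2: "sqrt 2 \<le> (2::real)" by (rule real_le_lsqrt) auto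
  have "cmod (T (int (q1 * q2)) n1 n2 n3 m)
      \<le> ((if even q1 then 2 else 1) * (real q1)^2) * ((if even Q2 then sqrt 2 else 1) * (of_int Q2)^2 * sqrt (of_int Q2))"
    unfolding TV norm_mult by (rule mult_mono[OF B1 B2]) auto
  also have "\<dots> \<le> 4 * real q1 ^ 2 * real q2 powr (5/2)"
  proof -
    have ne: "\<not> (even q1 \<and> even q2)"
      using assms(3) coprime_common_divisor[of q1 q2 2] by auto
    have A: "(if even q1 then 2 else 1) * (if even q2 then sqrt 2 else 1) \<le> (4::real)"
      using ne s2 by auto
    have "((if even q1 then 2 else 1) * (real q1)^2) * ((if even Q2 then sqrt 2 else 1) * (of_int Q2)^2 * sqrt (of_int Q2))
        = ((if even q1 then 2 else 1) * (if even q2 then sqrt 2 else 1)) * ((real q1)^2 * ((real q2)^2 * sqrt (real q2)))"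
      unfolding Q2_def by simp
    also have "\<dots> \<le> 4 * ((real q1)^2 * ((real q2)^2 * sqrt (real q2)))"
      by (rule mult_right_mono[OF A]) auto
    finally show ?thesis unfolding pw by (simp add: mult.assoc)
  qed
  finally show ?thesis .
qed



end
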